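(* For $n>2$ and $1<k<n$, the graph $G=H_B(n,k)$ has diameter $\mathrm{diam}(G)=4$ and radius $\mathrm{rad}(G)=2$.
   Context: Fix integers $n\ge 2$ and $1\le k<n$ and positive real numbers $x_1<x_2<\dots<x_n$. Let $\mathscr{B}_n=\{\pm x_1,\pm x_2,\dots,\pm x_{n-1},x_n\}$ (so $-x_n\notin\mathscr{B}_n$). Let $\phi(\mathscr{B}_n)$ be the family of all nonempty subsets $S\subseteq\mathscr{B}_n$ whose elements have pairwise distinct absolute values and whose element of largest absolute value is positive. Let $\mathscr{B}_n^+=\{x_1,\dots,x_n\}$, let $V_1$ be the set of all $k$-element subsets of $\mathscr{B}_n^+$, and let $V_2=\phi(\mathscr{B}_n)\setminus V_1$. For $A\in\phi(\mathscr{B}_n)$ put $A^\dagger=\{|a|:a\in A\}$. The bipartite Kneser B type-$k$ graph $H_B(n,k)$ is the simple graph with vertex set $V_1\cup V_2$ in which $X\in V_1$ and $Y\in V_2$ are adjacent if and only if $X\subseteq Y^\dagger$ or $Y^\dagger\subseteq X$, and there are no other edges. *)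

theory Defs
  imports Main "HOL-Library.Extended_Nat"
begin

inductive walk :: "('a \<Rightarrow> 'a \<Rightarrow> bool) \<Rightarrow> 'a \<Rightarrow> 'a \<Rightarrow> nat \<Rightarrow> bool" for E where
  walk_nil: "walk E u u 0"
| walk_cons: "E u w \<Longrightarrow> walk E w v m \<Longrightarrow> walk E u v (Suc m)"

text \<open>Distance: length of a shortest walk; infinity if none exists.\<close>
definition gdist :: "('a \<Rightarrow> 'a \<Rightarrow> bool) \<Rightarrow> 'a \<Rightarrow> 'a \<Rightarrow> enat" where
  "gdist E u v = (INF m \<in> {m. walk E u v m}. enat m)"

definition ecc :: "'a set \<Rightarrow> ('a \<Rightarrow> 'a \<Rightarrow> bool) \<Rightarrow> 'a \<Rightarrow> enat" where
  "ecc V E u = (SUP v \<in> V. gdist E u v)"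

definition diameter :: "'a set \<Rightarrow> ('a \<Rightarrow> 'a \<Rightarrow> bool) \<Rightarrow> enat" where
  "diameter V E = (SUP u \<in> V. ecc V E u)"

definition radius :: "'a set \<Rightarrow> ('a \<Rightarrow> 'a \<Rightarrow> bool) \<Rightarrow> enat" where
  "radius V E = (INF u \<in> V. ecc V E u)"

text \<open>The points x_1 < ... < x_n are given by a function x :: nat => real on indices 1..n.\<close>

definition Bn :: "(nat \<Rightarrow> real) \<Rightarrow> nat \<Rightarrow> real set" where
  "Bn x n = {x i | i. 1 \<le> i \<and> i \<le> n} \<union> {- x i | i. 1 \<le> i \<and> i \<le> n - 1}"

definition Bn_plus :: "(nat \<Rightarrow> real) \<Rightarrow> nat \<Rightarrow> real set" where
  "Bn_plus x n = {x i | i. 1 \<le> i \<and> i \<le> n}"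

definition phiB :: "(nat \<Rightarrow> real) \<Rightarrow> nat \<Rightarrow> real set set" where
  "phiB x n = {S. S \<subseteq> Bn x n \<and> S \<noteq> {} \<and> inj_on abs S \<and>
                  (\<forall>a\<in>S. (\<forall>b\<in>S. \<bar>b\<bar> \<le> \<bar>a\<bar>) \<longrightarrow> 0 < a)}"

definition V1 :: "(nat \<Rightarrow> real) \<Rightarrow> nat \<Rightarrow> nat \<Rightarrow> real set set" where
  "V1 x n k = {X. X \<subseteq> Bn_plus x n \<and> card X = k}"

definition V2 :: "(nat \<Rightarrow> real) \<Rightarrow> nat \<Rightarrow> nat \<Rightarrow> real set set" where
  "V2 x n k = phiB x n - V1 x n k"

definition dagger :: "real set \<Rightarrow> real set" where
  "dagger A = abs ` A"

definition HB_vertices :: "(nat \<Rightarrow> real) \<Rightarrow> nat \<Rightarrow> nat \<Rightarrow> real set set" where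
  "HB_vertices x n k = V1 x n k \<union> V2 x n k"

definition HB_rel :: "(nat \<Rightarrow> real) \<Rightarrow> nat \<Rightarrow> nat \<Rightarrow> real set \<Rightarrow> real set \<Rightarrow> bool" where
  "HB_rel x n k X Y \<longleftrightarrow> X \<in> V1 x n k \<and> Y \<in> V2 x n k \<and> (X \<subseteq> dagger Y \<or> dagger Y \<subseteq> X)"

definition HB_adj :: "(nat \<Rightarrow> real) \<Rightarrow> nat \<Rightarrow> nat \<Rightarrow> real set \<Rightarrow> real set \<Rightarrow> bool" where
  "HB_adj x n k X Y \<longleftrightarrow> HB_rel x n k X Y \<or> HB_rel x n k Y X"

end

theory Submission
  imports Defs
begin

lemma walk0: "walk E u v 0 \<longleftrightarrow> u = v"
  by (auto elim: walk.cases intro: walk.intros)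

lemma walkSuc: "walk E u v (Suc m) \<longleftrightarrow> (\<exists>w. E u w \<and> walk E w v m)"
  by (auto elim: walk.cases intro: walk.intros)

lemma walk_trans: "walk E u v a \<Longrightarrow> walk E v w b \<Longrightarrow> walk E u w (a+b)"
  by (induction rule: walk.induct) (auto intro: walk.intros)

lemma walk_snoc: "walk E u v m \<Longrightarrow> E v w \<Longrightarrow> walk E u w (Suc m)"
  using walk_trans[of E u v m w 1] by (simp add: walk.intros)

lemma walk_sym: assumes "\<And>a b. E a b \<Longrightarrow> E b a" "walk E u v m" shows "walk E v u m"
  using assms(2) by (induction rule: walk.induct) (auto intro: walk.intros walk_snoc assms(1))

lemma gdist_le: "walk E u v m \<Longrightarrow> gdist E u v \<le> enat m"
  unfolding gdist_def by (rule INF_lower) simp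

lemma gdist_ge: "(\<And>j. j < m \<Longrightarrow> \<not> walk E u v j) \<Longrightarrow> enat m \<le> gdist E u v"
  unfolding gdist_def by (rule INF_greatest) (auto simp: not_less[symmetric])

locale hbsetup =
  fixes x :: "nat \<Rightarrow> real" and n k :: nat
  assumes n2: "n > 2" and k1: "1 < k" and kn: "k < n"
    and pos: "\<forall>i. 1 \<le> i \<and> i \<le> n \<longrightarrow> 0 < x i"
    and mono: "\<forall>i j. 1 \<le> i \<and> i < j \<and> j \<le> n \<longrightarrow> x i < x j"
begin

lemma inj: "inj_on x {1..n}"
  unfolding inj_on_def
proof (intro ballI impI)
  fix i j assume i: "i \<in> {1..n}" and j: "j \<in> {1..n}" and e: "x i = x j"
  show "i = j"
  proof (rule ccontr)
    assume "i \<noteq> j"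
    then have "i < j \<or> j < i" by auto
    then show False using mono i j e by force
  qed
qed

lemma Bp: "Bn_plus x n = x ` {1..n}" unfolding Bn_plus_def by auto

lemma cardBp: "card (Bn_plus x n) = n" unfolding Bp using card_image[OF inj] by simp

lemma finBp: "finite (Bn_plus x n)" by (simp add: Bp)

lemma posBp: "a \<in> Bn_plus x n \<Longrightarrow> 0 < a"
  using pos unfolding Bn_plus_def by auto

lemma dagger_pos: "(\<forall>a\<in>A. 0<a) \<Longrightarrow> dagger A = A"
  unfolding dagger_def by force

lemma dagger_sub: "Y \<subseteq> Bn x n \<Longrightarrow> dagger Y \<subseteq> Bn_plus x n"
proof
  fix a assume Y: "Y \<subseteq> Bn x n" and a: "a \<in> dagger Y"
  then obtain b where b: "b \<in> Bn x n" "a = \<bar>b\<bar>" unfolding dagger_def by auto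
  then obtain i where "1 \<le> i" "i \<le> n" "b = x i \<or> b = - x i" unfolding Bn_def by auto
  moreover then have "0 < x i" using pos by auto
  ultimately show "a \<in> Bn_plus x n" using b unfolding Bn_plus_def by auto
qed

lemma V12: "X \<in> V1 x n k \<Longrightarrow> X \<notin> V2 x n k" by (simp add: V2_def)

lemma adj_cases: "HB_adj x n k a b \<Longrightarrow> (a \<in> V1 x n k \<and> b \<in> V2 x n k) \<or> (a \<in> V2 x n k \<and> b \<in> V1 x n k)"
  unfolding HB_adj_def HB_rel_def by auto

lemma adj_sym: "HB_adj x n k a b \<Longrightarrow> HB_adj x n k b a"
  unfolding HB_adj_def by auto

lemma H_V2: "Bn_plus x n \<in> V2 x n k"
proof -
  have "x 1 \<in> Bn_plus x n" using n2 unfolding Bn_plus_def by auto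
  moreover have "inj_on abs (Bn_plus x n)"
    unfolding inj_on_def using posBp by (metis abs_of_pos)
  ultimately have "Bn_plus x n \<in> phiB x n"
    unfolding phiB_def Bn_def Bn_plus_def using posBp by (auto simp: Bn_plus_def)
  moreover have "Bn_plus x n \<notin> V1 x n k" using cardBp kn unfolding V1_def by auto
  ultimately show ?thesis unfolding V2_def by auto
qed

lemma V1_adj_H: "X \<in> V1 x n k \<Longrightarrow> HB_adj x n k (Bn_plus x n) X"
  using H_V2 dagger_pos[of "Bn_plus x n"] posBp
  unfolding HB_adj_def HB_rel_def V1_def by auto

lemma V2_nbr: "Y \<in> V2 x n k \<Longrightarrow> \<exists>X\<in>V1 x n k. HB_adj x n k X Y"
proof -
  assume Y: "Y \<in> V2 x n k"
  then have "Y \<subseteq> Bn x n" unfolding V2_def phiB_def by auto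
  then have D: "dagger Y \<subseteq> Bn_plus x n" by (rule dagger_sub)
  have fD: "finite (dagger Y)" using D finBp finite_subset by blast
  obtain X where X: "X \<subseteq> Bn_plus x n" "card X = k" "X \<subseteq> dagger Y \<or> dagger Y \<subseteq> X"
  proof (cases "k \<le> card (dagger Y)")
    case True
    then obtain T where "T \<subseteq> dagger Y" "card T = k" by (rule obtain_subset_with_card_n)
    then show ?thesis using that D by blast
  next
    case False
    have "card (Bn_plus x n - dagger Y) = n - card (dagger Y)"
      using card_Diff_subset[OF fD D] cardBp by simp
    then have "k - card (dagger Y) \<le> card (Bn_plus x n - dagger Y)" using kn by simp
    then obtain T where T: "T \<subseteq> Bn_plus x n - dagger Y" "card T = k - card (dagger Y)" "finite T"
      by (rule obtain_subset_with_card_n)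
    have "card (dagger Y \<union> T) = card (dagger Y) + card T"
      using T fD by (intro card_Un_disjoint) auto
    then have "card (dagger Y \<union> T) = k" using T False by simp
    then show ?thesis using that[of "dagger Y \<union> T"] D T by blast
  qed
  then have "X \<in> V1 x n k" unfolding V1_def by auto
  then show ?thesis using X Y unfolding HB_adj_def HB_rel_def by blast
qed

lemma reach_H: "v \<in> HB_vertices x n k \<Longrightarrow> \<exists>m\<le>2. walk (HB_adj x n k) (Bn_plus x n) v m"
proof -
  assume v: "v \<in> HB_vertices x n k"
  show ?thesis
  proof (cases "v \<in> V1 x n k")
    case True
    then have "walk (HB_adj x n k) (Bn_plus x n) v 1"
      using V1_adj_H by (simp add: walkSuc walk0)
    then show ?thesis by (intro exI[of _ 1]) auto
  next
    case False
    then have "v \<in> V2 x n k" using v unfolding HB_vertices_def by auto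
    then obtain X where "X \<in> V1 x n k" "HB_adj x n k X v" using V2_nbr by blast
    then have "walk (HB_adj x n k) (Bn_plus x n) v 2"
      using V1_adj_H by (auto simp: walkSuc walk0 numeral_2_eq_2)
    then show ?thesis by (intro exI[of _ 2]) auto
  qed
qed

lemma x1_V2: "{x 1} \<in> V2 x n k" and x2_V2: "{x 2} \<in> V2 x n k"
proof -
  have "x 1 \<in> Bn x n" "x 2 \<in> Bn x n" using n2 unfolding Bn_def by auto
  moreover have "0 < x 1" "0 < x 2" using pos n2 by auto
  ultimately show "{x 1} \<in> V2 x n k" "{x 2} \<in> V2 x n k"
    using k1 unfolding V2_def V1_def phiB_def by auto
qed

lemma walk1: "walk E u v 1 \<longleftrightarrow> E u v"
  by (simp add: walkSuc walk0 One_nat_def del: One_nat_def[symmetric])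

lemma far: "u \<in> HB_vertices x n k \<Longrightarrow> \<exists>v\<in>HB_vertices x n k. \<not> walk (HB_adj x n k) u v 0 \<and> \<not> walk (HB_adj x n k) u v 1"
proof -
  assume u: "u \<in> HB_vertices x n k"
  show ?thesis
  proof (cases "u \<in> V1 x n k")
    case True
    define A where "A = x ` {1..k}"
    define B where "B = x ` {2..k+1}"
    have iA: "inj_on x {1..k}" by (rule inj_on_subset[OF inj]) (use kn in auto)
    have iB: "inj_on x {2..k+1}" by (rule inj_on_subset[OF inj]) (use kn in auto)
    have cA: "card A = k" unfolding A_def using card_image[OF iA] by simp
    have cB: "card B = k" unfolding B_def using card_image[OF iB] by simp
    have "A \<subseteq> Bn_plus x n" "B \<subseteq> Bn_plus x n" using kn unfolding A_def B_def Bp by auto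
    then have AB: "A \<in> V1 x n k" "B \<in> V1 x n k" using cA cB unfolding V1_def by auto
    have "x 1 \<in> A" using k1 unfolding A_def by auto
    moreover have "x 1 \<notin> B"
    proof
      assume "x 1 \<in> B"
      then obtain i where i: "i \<in> {2..k+1}" "x 1 = x i" unfolding B_def by auto
      then have "1 = i" using inj_onD[OF inj i(2)] i kn by auto
      then show False using i by auto
    qed
    ultimately have "A \<noteq> B" by auto
    then obtain v where v: "v \<in> V1 x n k" "v \<noteq> u" using AB by blast
    have "\<not> HB_adj x n k u v" using adj_cases V12 True v by blast
    moreover have "v \<in> HB_vertices x n k" using v unfolding HB_vertices_def by blast
    ultimately show ?thesis using v by (auto simp only: walk1 walk0)
  next
    case False
    then have uV2: "u \<in> V2 x n k" using u unfolding HB_vertices_def by auto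
    have "x 1 < x 2" using mono[rule_format, of 1 2] n2 by simp
    then have "x 1 \<noteq> x 2" by simp
    then have "{x 1} \<noteq> {x 2}" by simp
    then obtain v where v: "v \<in> V2 x n k" "v \<noteq> u" using x1_V2 x2_V2 by blast
    have "\<not> HB_adj x n k u v" using adj_cases V12 uV2 v by blast
    moreover have "v \<in> HB_vertices x n k" using v unfolding HB_vertices_def by blast
    ultimately show ?thesis using v by (auto simp only: walk1 walk0)
  qed
qed

definition Yp where "Yp = insert (- x 2) (x ` {3..k+1})"

lemma Yp_V2: "Yp \<in> V2 x n k"
proof -
  have p: "0 < x i" if "i \<in> {2..k+1}" for i using pos[rule_format, of i] kn that by auto
  have BpB: "Bn_plus x n \<subseteq> Bn x n" unfolding Bn_def Bn_plus_def by blast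
  have "1 \<le> (2::nat) \<and> 2 \<le> n-1" using n2 by simp
  then have m2: "- x 2 \<in> Bn x n" unfolding Bn_def by blast
  have "x ` {3..k+1} \<subseteq> Bn_plus x n" unfolding Bp using kn by auto
  then have sub: "Yp \<subseteq> Bn x n" unfolding Yp_def using m2 BpB by blast
  have ia: "inj_on abs Yp"
    unfolding inj_on_def Yp_def
  proof (intro ballI impI)
    fix a b assume a: "a \<in> insert (- x 2) (x ` {3..k + 1})" and b: "b \<in> insert (- x 2) (x ` {3..k + 1})"
      and e: "\<bar>a\<bar> = \<bar>b\<bar>"
    have lt: "x 2 < x i" if "i \<in> {3..k+1}" for i using mono[rule_format, of 2 i] kn that by auto
    have neg: False if "i \<in> {3..k+1}" "\<bar>- x 2\<bar> = \<bar>x i\<bar>" for i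
    proof -
      have "0 < x i" "0 < x 2" using p that k1 by auto
      then show False using that lt[of i] by auto
    qed
    have A: "a = - x 2 \<or> (\<exists>i\<in>{3..k+1}. a = x i)" using a by auto
    have B: "b = - x 2 \<or> (\<exists>i\<in>{3..k+1}. b = x i)" using b by auto
    from A B show "a = b"
    proof (elim disjE bexE)
      assume "a = - x 2" "b = - x 2" then show ?thesis by simp
    next
      fix i assume "a = - x 2" "i \<in> {3..k+1}" "b = x i"
      then show ?thesis using neg[of i] e by simp
    next
      fix i assume "b = - x 2" "i \<in> {3..k+1}" "a = x i"
      then show ?thesis using neg[of i] e by simp
    next
      fix i j assume ij: "i \<in> {3..k+1}" "a = x i" "j \<in> {3..k+1}" "b = x j"
      then have "0 < x i" "0 < x j" using p by auto
      then show ?thesis using ij e by simp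
    qed
  qed
  have mx: "\<forall>a\<in>Yp. (\<forall>b\<in>Yp. \<bar>b\<bar> \<le> \<bar>a\<bar>) \<longrightarrow> 0 < a"
  proof (intro ballI impI)
    fix a assume a: "a \<in> Yp" and h: "\<forall>b\<in>Yp. \<bar>b\<bar> \<le> \<bar>a\<bar>"
    show "0 < a"
    proof (cases "a = - x 2")
      case True
      have "x 3 \<in> Yp" using k1 unfolding Yp_def by auto
      then have "\<bar>x 3\<bar> \<le> \<bar>a\<bar>" using h by auto
      moreover have "x 2 < x 3" "0 < x 2" using mono[rule_format, of 2 3] pos[rule_format, of 2] kn k1 by auto
      ultimately show ?thesis using True by auto
    next
      case False
      then show ?thesis using a p unfolding Yp_def by auto
    qed
  qed
  have ne: "Yp \<noteq> {}" unfolding Yp_def by simp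
  have nV1: "Yp \<notin> V1 x n k"
  proof
    assume "Yp \<in> V1 x n k"
    then have "- x 2 \<in> Bn_plus x n" unfolding V1_def Yp_def by auto
    then show False using posBp[of "- x 2"] p[of 2] k1 by auto
  qed
  show ?thesis unfolding V2_def phiB_def using sub ia mx nV1 ne by blast
qed

lemma dagger_Yp: "dagger Yp = x ` {2..k+1}"
proof -
  have p: "0 < x i" if "i \<in> {2..k+1}" for i using pos[rule_format, of i] kn that by auto
  have "dagger Yp = insert \<bar>- x 2\<bar> (abs ` x ` {3..k+1})" unfolding dagger_def Yp_def by simp
  also have "abs ` x ` {3..k+1} = (\<lambda>i. \<bar>x i\<bar>) ` {3..k+1}" by (simp add: image_image)
  also have "\<dots> = x ` {3..k+1}"
  proof (rule image_cong[OF refl])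
    fix i assume "i \<in> {3..k+1}"
    then have "0 < x i" using p by auto
    then show "\<bar>x i\<bar> = x i" by simp
  qed
  also have "\<bar>- x 2\<bar> = x 2" using p[of 2] k1 by auto
  also have "insert (x 2) (x ` {3..k+1}) = x ` (insert 2 {3..k+1})" by simp
  also have "insert 2 {3..k+1} = {2..k+1}" using k1 by auto
  finally show ?thesis .
qed

lemma pair: assumes m: "m < 4" shows "\<not> walk (HB_adj x n k) {x 1} Yp m"
proof -
  have V2s: "{x 1} \<in> V2 x n k" "Yp \<in> V2 x n k" using x1_V2 Yp_V2 by auto
  have nV2: "\<And>a b. a \<in> V2 x n k \<Longrightarrow> b \<in> V2 x n k \<Longrightarrow> \<not> HB_adj x n k a b"
    using adj_cases V12 by blast
  have ne: "{x 1} \<noteq> Yp"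
  proof
    assume "{x 1} = Yp"
    then have "- x 2 = x 1" unfolding Yp_def by auto
    then show False using pos[rule_format, of 1] pos[rule_format, of 2] n2 by simp
  qed
  have no2: "\<not> (HB_adj x n k {x 1} a \<and> HB_adj x n k a Yp)" for a
  proof
    assume h: "HB_adj x n k {x 1} a \<and> HB_adj x n k a Yp"
    then have aV1: "a \<in> V1 x n k" using adj_cases V2s V12 by blast
    then have ca: "card a = k" unfolding V1_def by auto
    then have fa: "finite a" using k1 card.infinite by fastforce
    have r1: "a \<subseteq> dagger {x 1} \<or> dagger {x 1} \<subseteq> a"
      using h aV1 V12 unfolding HB_adj_def HB_rel_def by blast
    have "dagger {x 1} = {x 1}" using pos[rule_format, of 1] n2 by (auto simp: dagger_def)
    moreover have "\<not> a \<subseteq> {x 1}"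
    proof
      assume "a \<subseteq> {x 1}"
      then have "card a \<le> card {x 1}" by (intro card_mono) auto
      then have "card a \<le> 1" by simp
      then show False using ca k1 by auto
    qed
    ultimately have x1a: "x 1 \<in> a" using r1 by auto
    have r2: "a \<subseteq> x ` {2..k+1} \<or> x ` {2..k+1} \<subseteq> a"
      using h aV1 V12 unfolding HB_adj_def HB_rel_def dagger_Yp by blast
    have nx1: "x 1 \<notin> x ` {2..k+1}"
    proof
      assume "x 1 \<in> x ` {2..k+1}"
      then obtain i where i: "i \<in> {2..k+1}" "x 1 = x i" by auto
      then have "1 = i" using inj_onD[OF inj i(2)] kn by auto
      then show False using i by auto
    qed
    show False
    proof (cases "a \<subseteq> x ` {2..k+1}")
      case True then show ?thesis using x1a nx1 by auto
    next
      case False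
      then have "insert (x 1) (x ` {2..k+1}) \<subseteq> a" using r2 x1a by auto
      then have "card (insert (x 1) (x ` {2..k+1})) \<le> k" using card_mono[OF fa] ca by simp
      moreover have "card (x ` {2..k+1}) = k"
      proof -
        have iB: "inj_on x {2..k+1}" by (rule inj_on_subset[OF inj]) (use kn in auto)
        show ?thesis using card_image[OF iB] by simp
      qed
      ultimately show False using nx1 by simp
    qed
  qed
  have "m = 0 \<or> m = Suc 0 \<or> m = Suc (Suc 0) \<or> m = Suc (Suc (Suc 0))" using m by auto
  then show ?thesis
  proof (elim disjE)
    assume "m = 0" then show ?thesis using ne by (simp add: walk0)
  next
    assume "m = Suc 0" then show ?thesis using nV2 V2s by (simp add: walk0 walkSuc)
  next
    assume "m = Suc (Suc 0)" then show ?thesis using no2 by (simp add: walk0 walkSuc)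
  next
    assume m3: "m = Suc (Suc (Suc 0))"
    have no3: "\<not> (HB_adj x n k {x 1} a \<and> HB_adj x n k a b \<and> HB_adj x n k b Yp)" for a b
    proof
      assume h: "HB_adj x n k {x 1} a \<and> HB_adj x n k a b \<and> HB_adj x n k b Yp"
      then have "a \<in> V1 x n k" using adj_cases V2s V12 by blast
      then have "b \<in> V2 x n k" using h adj_cases V12 by blast
      then show False using h nV2 V2s by blast
    qed
    show ?thesis using no3 m3 by (auto simp: walkSuc walk0)
  qed
qed

end

theorem mainTheorem13:
  fixes x :: "nat \<Rightarrow> real" and n k :: nat
  assumes "n > 2" and "1 < k" and "k < n"
    and "\<forall>i. 1 \<le> i \<and> i \<le> n \<longrightarrow> 0 < x i"
    and "\<forall>i j. 1 \<le> i \<and> i < j \<and> j \<le> n \<longrightarrow> x i < x j"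
  shows "diameter (HB_vertices x n k) (HB_adj x n k) = 4
       \<and> radius (HB_vertices x n k) (HB_adj x n k) = 2"
proof -
  interpret hbsetup x n k using assms by unfold_locales auto
  define V where "V = HB_vertices x n k"
  define E where "E = HB_adj x n k"
  define H where "H = Bn_plus x n"
  have HV: "H \<in> V" using H_V2 unfolding H_def V_def HB_vertices_def by auto
  have symE: "\<And>a b. E a b \<Longrightarrow> E b a" unfolding E_def using adj_sym by blast
  have d_le: "gdist E u v \<le> 4" if uv: "u \<in> V" "v \<in> V" for u v
  proof -
    obtain m1 where m1: "m1 \<le> 2" "walk E H u m1" using reach_H uv unfolding E_def H_def V_def by blast
    obtain m2 where m2: "m2 \<le> 2" "walk E H v m2" using reach_H uv unfolding E_def H_def V_def by blast
    have "walk E u v (m1 + m2)" using walk_trans[OF walk_sym[OF symE m1(2)] m2(2)] .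
    then have "gdist E u v \<le> enat (m1 + m2)" by (rule gdist_le)
    also have "\<dots> \<le> enat 4" using m1 m2 by simp
    finally show ?thesis by (simp add: numeral_eq_enat)
  qed
  have diam_le: "diameter V E \<le> 4"
    unfolding diameter_def ecc_def using d_le by (intro SUP_least) auto
  have YV: "{x 1} \<in> V" "Yp \<in> V" using x1_V2 Yp_V2 unfolding V_def HB_vertices_def by auto
  have "enat 4 \<le> gdist E {x 1} Yp" using pair unfolding E_def by (intro gdist_ge) auto
  also have "\<dots> \<le> ecc V E {x 1}" unfolding ecc_def using YV by (intro SUP_upper) auto
  also have "\<dots> \<le> diameter V E" unfolding diameter_def using YV by (intro SUP_upper) auto
  finally have diam_ge: "4 \<le> diameter V E" by (simp add: numeral_eq_enat)
  have eccH: "ecc V E H \<le> 2"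
    unfolding ecc_def
  proof (rule SUP_least)
    fix v assume "v \<in> V"
    then obtain m where m: "m \<le> 2" "walk E H v m" using reach_H unfolding E_def H_def V_def by blast
    then have "gdist E H v \<le> enat m" by (intro gdist_le)
    also have "\<dots> \<le> enat 2" using m by simp
    finally show "gdist E H v \<le> 2" by (simp add: numeral_eq_enat)
  qed
  have rad_le: "radius V E \<le> 2"
    unfolding radius_def using HV eccH by (meson INF_lower order_trans)
  have rad_ge: "2 \<le> radius V E"
    unfolding radius_def
  proof (rule INF_greatest)
    fix u assume u: "u \<in> V"
    then obtain v where v: "v \<in> V" "\<not> walk E u v 0" "\<not> walk E u v 1"
      using far unfolding V_def E_def by blast
    have "enat 2 \<le> gdist E u v" using v by (intro gdist_ge) (auto simp: less_2_cases_iff)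
    also have "\<dots> \<le> ecc V E u" unfolding ecc_def using v by (intro SUP_upper) auto
    finally show "2 \<le> ecc V E u" by (simp add: numeral_eq_enat)
  qed
  show ?thesis using diam_le diam_ge rad_le rad_ge unfolding V_def E_def
    by (meson antisym)
qed

end
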